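(* Let $n\ge1$ and let $x\in\mathbb{Z}_n$ have order $m$. Then the degree of $x$ in $OD(\mathbb{Z}_n)$ is $$\deg(x)=m-2\phi(m)+\sum_{\lambda\mid \frac{n}{m}}\phi(\lambda m),$$ where $\phi$ is Euler's totient function and the sum runs over positive divisors $\lambda$ of $n/m$.
   Context: $\mathbb{Z}_n$ is the additive cyclic group of integers modulo $n$. For a finite group $G$, $o(x)$ denotes the order of $x\in G$. The order-divisor graph $OD(G)$ is the simple undirected graph with vertex set $G$, in which two distinct vertices $x,y$ are adjacent if and only if $o(x)\neq o(y)$ and either $o(x)\mid o(y)$ or $o(y)\mid o(x)$. *)

theory Defs
  imports "HOL-Algebra.Elementary_Groups" "HOL-Algebra.Multiplicative_Group" "HOL-Number_Theory.Totient"
begin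

definition od_adj :: "('a, 'b) monoid_scheme \<Rightarrow> 'a \<Rightarrow> 'a \<Rightarrow> bool" where
  "od_adj G x y \<longleftrightarrow> x \<noteq> y \<and> group.ord G x \<noteq> group.ord G y \<and>
     (group.ord G x dvd group.ord G y \<or> group.ord G y dvd group.ord G x)"

definition od_degree :: "('a, 'b) monoid_scheme \<Rightarrow> 'a \<Rightarrow> nat" where
  "od_degree G x = card {y \<in> carrier G. od_adj G x y}"

end

theory Submission imports Defs begin

lemma dvd_gcd_aux: "(n::nat) > 0 \<Longrightarrow> n dvd k * a \<longleftrightarrow> (n div gcd a n) dvd k"
  by (simp add: div_dvd_iff_mult gcd_mult_distrib_nat)

lemma ord_zmod:
  assumes n: "n \<ge> 1" and y: "y \<in> {0..<int n}"
  shows "group.ord (integer_mod_group n) y = n div gcd (nat y) n"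
proof -
  interpret G: group "integer_mod_group n" by simp
  have yc: "y \<in> carrier (integer_mod_group n)" using y n by (simp add: carrier_integer_mod_group)
  show ?thesis
  proof (subst G.ord_unique[OF yc], intro allI)
    fix k :: nat
    have "(y [^]\<^bsub>integer_mod_group n\<^esub> k = \<one>\<^bsub>integer_mod_group n\<^esub>) \<longleftrightarrow> (int k * y) mod int n = 0"
      by simp
    also have "\<dots> \<longleftrightarrow> int n dvd int (k * nat y)" using y by (simp add: dvd_eq_mod_eq_0)
    also have "\<dots> \<longleftrightarrow> n dvd k * nat y" by (simp only: of_nat_dvd_iff)
    also have "\<dots> \<longleftrightarrow> (n div gcd (nat y) n) dvd k" using n dvd_gcd_aux by simp
    finally show "(y [^]\<^bsub>integer_mod_group n\<^esub> k = \<one>\<^bsub>integer_mod_group n\<^esub>) = (n div gcd (nat y) n dvd k)" .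
  qed
qed

lemma card_ord_eq:
  assumes n: "n \<ge> 1" and d: "d dvd n"
  shows "card {y \<in> carrier (integer_mod_group n). group.ord (integer_mod_group n) y = d} = totient d"
proof -
  have C: "carrier (integer_mod_group n) = {0..<int n}" using n by (simp add: carrier_integer_mod_group)
  have dpos: "d > 0" using d n by (metis dvd_0_left_iff not_one_le_zero neq0_conv)
  have "{y \<in> carrier (integer_mod_group n). group.ord (integer_mod_group n) y = d}
        = (\<lambda>k. int (k mod n)) ` {k\<in>{0<..n}. gcd k n = n div d}"
  proof (intro equalityI subsetI)
    fix y assume "y \<in> {y \<in> carrier (integer_mod_group n). group.ord (integer_mod_group n) y = d}"
    hence y: "y \<in> {0..<int n}" and o: "n div gcd (nat y) n = d" using ord_zmod[OF n] C by auto
    have g: "gcd (nat y) n = n div d"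
      by (metis o d dpos gcd_dvd2 dvd_div_eq_mult n not_one_le_zero gcd_eq_0_iff div_mult_self1_is_m
          dvd_mult_div_cancel mult.commute neq0_conv)
    show "y \<in> (\<lambda>k. int (k mod n)) ` {k\<in>{0<..n}. gcd k n = n div d}"
    proof (cases "y = 0")
      case True
      then show ?thesis using g n by (auto intro!: image_eqI[of _ _ n])
    next
      case False
      then show ?thesis using g y by (auto intro!: image_eqI[of _ _ "nat y"])
    qed
  next
    fix y assume "y \<in> (\<lambda>k. int (k mod n)) ` {k\<in>{0<..n}. gcd k n = n div d}"
    then obtain k where k: "k \<in> {0<..n}" "gcd k n = n div d" and yk: "y = int (k mod n)" by auto
    have yr: "y \<in> {0..<int n}" using yk n by auto
    have g: "gcd (nat y) n = n div d" using k yk by (simp add: gcd_mod_left)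
    have "n div (n div d) = d" using d dpos n using dvd_div_mult_self by (metis dvd_mult_div_cancel neq0_conv not_one_le_zero dvd_div_eq_0_iff nonzero_mult_div_cancel_right div_mult_self1_is_m)
    then show "y \<in> {y \<in> carrier (integer_mod_group n). group.ord (integer_mod_group n) y = d}"
      using ord_zmod[OF n yr] g yr C by simp
  qed
  also have "card \<dots> = card {k\<in>{0<..n}. gcd k n = n div d}"
  proof (rule card_image, rule inj_onI)
    fix a b assume "a \<in> {k\<in>{0<..n}. gcd k n = n div d}" "b \<in> {k\<in>{0<..n}. gcd k n = n div d}"
      "int (a mod n) = int (b mod n)"
    then show "a = b"
      by (metis (no_types, lifting) greaterThanAtMost_iff mem_Collect_eq mod_less mod_self nat_less_le of_nat_eq_iff gr_implies_not0 mod_0)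
  qed
  also have "\<dots> = totient (n div (n div d))"
    using n d by (intro card_gcd_eq_totient) (auto simp: div_dvd_div)
  also have "n div (n div d) = d" using d dpos n using dvd_div_mult_self by (metis dvd_mult_div_cancel neq0_conv not_one_le_zero dvd_div_eq_0_iff nonzero_mult_div_cancel_right div_mult_self1_is_m)
  finally show ?thesis .
qed

theorem mainTheorem11:
  fixes n :: nat and x :: int
  assumes "n \<ge> 1"
    and "x \<in> carrier (integer_mod_group n)"
  shows "int (od_degree (integer_mod_group n) x) =
           int (group.ord (integer_mod_group n) x)
           - 2 * int (totient (group.ord (integer_mod_group n) x))
           + (\<Sum>l\<in>{l::nat. l dvd n div group.ord (integer_mod_group n) x}.
                 int (totient (l * group.ord (integer_mod_group n) x)))"
proof -
  note n = assms(1)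
  define G where "G = integer_mod_group n"
  define m where "m = group.ord G x"
  have C: "carrier G = {0..<int n}" using n by (simp add: carrier_integer_mod_group G_def)
  have ordf: "group.ord G y = n div gcd (nat y) n" if "y \<in> carrier G" for y
    using ord_zmod[OF n] that C G_def by simp
  have orddvd: "group.ord G y dvd n" if "y \<in> carrier G" for y
    using ordf[OF that] by (simp add: div_dvd_iff_mult n) (metis dvd_def dvd_div_mult_self gcd_dvd2 mult.commute)
  have mdvd: "m dvd n" using orddvd assms(2) m_def G_def by simp
  have mpos: "m > 0" using mdvd n by (metis dvd_0_left_iff neq0_conv not_one_le_zero)
  define S where "S d = {y \<in> carrier G. group.ord G y = d}" for d
  define A where "A = {d. d dvd m}"
  define B where "B = {d. d dvd n \<and> m dvd d}"
  have fA: "finite A" unfolding A_def using mpos by simp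
  have fB: "finite B" unfolding B_def using n by simp
  have AB: "A \<inter> B = {m}" unfolding A_def B_def using mdvd by (auto intro: dvd_antisym)
  have "{y \<in> carrier G. od_adj G x y} = (\<Union>d\<in>(A \<union> B) - {m}. S d)"
    unfolding S_def A_def B_def od_adj_def m_def
    using orddvd by (auto intro: dvd_trans)
  hence "od_degree G x = card (\<Union>d\<in>(A \<union> B) - {m}. S d)" unfolding od_degree_def by simp
  also have "\<dots> = (\<Sum>d\<in>(A \<union> B) - {m}. card (S d))"
  proof (rule card_UN_disjoint)
    show "\<forall>i\<in>A \<union> B - {m}. finite (S i)" unfolding S_def C by (auto intro: finite_subset[of _ "{0..<int n}"])
  qed (auto simp: fA fB S_def)
  also have "\<dots> = (\<Sum>d\<in>(A \<union> B) - {m}. totient d)"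
  proof (rule sum.cong[OF refl])
    fix d assume "d \<in> (A \<union> B) - {m}"
    hence "d dvd n" unfolding A_def B_def using mdvd by (auto intro: dvd_trans)
    thus "card (S d) = totient d" unfolding S_def G_def by (rule card_ord_eq[OF n])
  qed
  finally have deg: "int (od_degree G x) = (\<Sum>d\<in>(A \<union> B) - {m}. int (totient d))"
    by simp
  have "(\<Sum>d\<in>(A \<union> B) - {m}. int (totient d)) = (\<Sum>d\<in>A \<union> B. int (totient d)) - int (totient m)"
    using fA fB AB by (subst sum_diff1) auto
  also have "(\<Sum>d\<in>A \<union> B. int (totient d)) = (\<Sum>d\<in>A. int (totient d)) + (\<Sum>d\<in>B. int (totient d)) - int (totient m)"
    using sum_Un[OF fA fB, of "\<lambda>d. int (totient d)"] AB by simp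
  also have "(\<Sum>d\<in>A. int (totient d)) = int m"
    using totient_divisor_sum[of m] unfolding A_def by (metis of_nat_sum)
  also have "(\<Sum>d\<in>B. int (totient d)) = (\<Sum>l\<in>{l::nat. l dvd n div m}. int (totient (l * m)))"
  proof (rule sum.reindex_bij_witness[of _ "\<lambda>l. l * m" "\<lambda>d. d div m"])
    fix l assume "l \<in> {l::nat. l dvd n div m}"
    then show "l * m div m = l" "l * m \<in> B" using mpos mdvd unfolding B_def
      by (auto simp: dvd_div_iff_mult)
  next
    fix d assume "d \<in> B"
    then show "d div m * m = d" "d div m \<in> {l::nat. l dvd n div m}" using mpos mdvd unfolding B_def
      by (auto simp: div_div_div_same dvd_div_mult_self intro: div_dvd_div)
  qed (auto simp: B_def)
  finally show ?thesis using deg unfolding G_def m_def by simp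
qed
end
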